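(* Let $(\mathscr T_t)_{t\ge0}$ be a Crump-Mode-Jagers process with generic waiting-time sequence $(X_j)_{j\in\mathbb N}$ as in the context, let $(X'_j)_{j\in\mathbb N}$ be an independent copy of it, and assume Assumption (A). Suppose that for some $\alpha>0$ and $K\in\mathbb N$, \[\sum_{j=1}^\infty\mathbb E\Big[e^{-\alpha\sum_{i=1}^jX_i}\Big]<1\quad\text{and}\quad\prod_{i=K+1}^\infty\mathbb E\Big[e^{\alpha(X'_i-X_i)}\Big]<\infty.\] Then the set $\mathcal P=\{u\in\mathcal U:\ u\text{ catches up to each of its ancestors}\}$ is almost surely finite.
   Context: Ulam–Harris tree: $\mathcal U=\bigcup_{n\ge0}\mathbb N^n$ with $\mathbb N^0=\{\varnothing\}$; $u=u_1\cdots u_k$, $|u|=k$, $uj$ is the $j$-th child of $u$, and concatenation $uv$ of $u$ and $v=v_1\cdots v_m$ is $u_1\cdots u_kv_1\cdots v_m$. The ancestors of $w=w_1\cdots w_k$ are $w_1\cdots w_\ell$ for $0\le\ell<k$ (with $\ell=0$ giving $\varnothing$). Let $(X_j)_{j\in\mathbb N}$ be $[0,\infty]$-valued random variables and for each $u\in\mathcal U$ let $(X(uj))_{j\in\mathbb N}$ be a copy of $(X_j)_j$, independent over different $u$. Birth times: $\mathcal B(\varnothing)=0$, $\mathcal B(ui)=\mathcal B(u)+\sum_{j=1}^iX(uj)$. For $u\in\mathcal U$ and $v=v_1\cdots v_m\in\mathcal U$ with $m\ge1$, say "$uv$ catches up to $u$" if there exists $j\in\mathbb N$ with $\mathcal B(uv(v_1+j))\le\mathcal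 B(u(v_1+j))$; a node $w$ catches up to its ancestor $a$ if, writing $w=av$, $w$ catches up to $a$ in this sense. Assumption (A): (i) $(X_i)_{i\in\mathbb N}$ mutually independent; (ii) $X_j<\infty$ a.s. for each $j$; (iii) $\sum_{j=1}^\infty\prod_{i=1}^j\mathbb P(X_i=0)<1$. *)

theory Defs
  imports "HOL-Probability.Probability"
begin

text \<open>Ulam-Harris nodes are lists of positive naturals; children are numbered 1,2,3,...\<close>
definition UH :: "nat list set" where
  "UH = {u. \<forall>x\<in>set u. 1 \<le> x}"

text \<open>Birth time of node w in the outcome \<omega>; X u \<omega> is the waiting time attached to node u
  (so X (u @ [j]) is the j-th waiting time of the children of u).
  B([]) = 0 and B(u@[i]) = B(u) + sum_{j=1..i} X(u@[j]).\<close>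
definition birth :: "(nat list \<Rightarrow> 'a \<Rightarrow> ennreal) \<Rightarrow> nat list \<Rightarrow> 'a \<Rightarrow> ennreal" where
  "birth X w \<omega> = (\<Sum>l<length w. \<Sum>j\<in>{1..w ! l}. X (take l w @ [j]) \<omega>)"

definition catches_up :: "(nat list \<Rightarrow> 'a \<Rightarrow> ennreal) \<Rightarrow> nat list \<Rightarrow> nat list \<Rightarrow> 'a \<Rightarrow> bool" where
  "catches_up X u v \<omega> \<longleftrightarrow> v \<noteq> [] \<and>
     (\<exists>j\<ge>1. birth X (u @ v @ [hd v + j]) \<omega> \<le> birth X (u @ [hd v + j]) \<omega>)"

definition catchP :: "(nat list \<Rightarrow> 'a \<Rightarrow> ennreal) \<Rightarrow> 'a \<Rightarrow> nat list set" where
  "catchP X \<omega> = {w \<in> UH. \<forall>l<length w. catches_up X (take l w) (drop l w) \<omega>}"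

definition eexp :: "ereal \<Rightarrow> ennreal" where
  "eexp x = (if x = \<infinity> then \<infinity> else if x = -\<infinity> then 0 else ennreal (exp (real_of_ereal x)))"

end

theory Submission imports Defs begin

definition AT :: "nat list set" where "AT = {a. a \<in> UH \<and> a \<noteq> []}"

lemma level_bij: "bij_betw (\<lambda>(x, v). x # v) ({1..} \<times> {w \<in> UH. length w = n}) {w \<in> UH. length w = Suc n}"
proof (rule bij_betwI')
  show "\<And>x y. x \<in> {1..} \<times> {w \<in> UH. length w = n} \<Longrightarrow> y \<in> {1..} \<times> {w \<in> UH. length w = n} \<Longrightarrow>
      ((case x of (x, v) \<Rightarrow> x # v) = (case y of (x, v) \<Rightarrow> x # v)) = (x = y)" by auto
  show "\<And>x. x \<in> {1..} \<times> {w \<in> UH. length w = n} \<Longrightarrow> (case x of (x, v) \<Rightarrow> x # v) \<in> {w \<in> UH. length w = Suc n}"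
    by (auto simp: UH_def)
  fix y assume "y \<in> {w \<in> UH. length w = Suc n}"
  then show "\<exists>x\<in>{1..} \<times> {w \<in> UH. length w = n}. y = (case x of (x, v) \<Rightarrow> x # v)"
    by (cases y) (auto simp: UH_def)
qed

lemma level_sum:
  fixes \<psi> :: "nat \<Rightarrow> ennreal"
  shows "(\<integral>\<^sup>+w. (\<Prod>l<length w. \<psi> (w!l)) \<partial>count_space {w\<in>UH. length w = n}) = (\<Sum>j. \<psi> (Suc j)) ^ n"
proof (induction n)
  case 0
  have "{w\<in>UH. length w = 0} = {[]}" by (auto simp: UH_def)
  then show ?case by (simp add: nn_integral_count_space_finite)
next
  case (Suc n)
  let ?U = "{w\<in>UH. length w = n}"
  have cU: "countable ?U" by (rule countable_subset[OF subset_UNIV]) simp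
  have c1: "countable {1::nat..}" by simp
  interpret S: sigma_finite_measure "count_space ?U"
    by (rule sigma_finite_measure_count_space_countable[OF cU])
  have s1: "(\<integral>\<^sup>+x. \<psi> x \<partial>count_space {1..}) = (\<Sum>j. \<psi> (Suc j))"
  proof -
    have "bij_betw Suc UNIV {1::nat..}"
    proof (rule bij_betwI')
      fix y :: nat assume "y \<in> {1..}"
      then show "\<exists>x\<in>UNIV. y = Suc x" by (intro bexI[of _ "y - 1"]) auto
    qed auto
    then have "(\<integral>\<^sup>+x. \<psi> x \<partial>count_space {1..}) = (\<integral>\<^sup>+j. \<psi> (Suc j) \<partial>count_space UNIV)"
      by (rule nn_integral_bij_count_space[symmetric])
    then show ?thesis by (simp add: nn_integral_count_space_nat)
  qed
  have "(\<integral>\<^sup>+w. (\<Prod>l<length w. \<psi> (w!l)) \<partial>count_space {w\<in>UH. length w = Suc n})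
      = (\<integral>\<^sup>+p. (\<lambda>w. \<Prod>l<length w. \<psi> (w!l)) ((\<lambda>(x, v). x # v) p) \<partial>count_space ({1..} \<times> ?U))"
    by (rule nn_integral_bij_count_space[symmetric, OF level_bij])
  also have "\<dots> = (\<integral>\<^sup>+p. \<psi> (fst p) * (\<Prod>l<length (snd p). \<psi> (snd p ! l)) \<partial>(count_space {1..} \<Otimes>\<^sub>M count_space ?U))"
    unfolding pair_measure_countable[OF c1 cU]
    by (intro nn_integral_cong) (auto simp del: prod.lessThan_Suc simp add: prod.lessThan_Suc_shift)
  also have "\<dots> = (\<integral>\<^sup>+x. \<integral>\<^sup>+v. \<psi> x * (\<Prod>l<length v. \<psi> (v ! l)) \<partial>count_space ?U \<partial>count_space {1..})"
  proof -
    have mm: "(\<lambda>p. \<psi> (fst p) * (\<Prod>l<length (snd p). \<psi> (snd p ! l))) \<in> borel_measurable (count_space {1..} \<Otimes>\<^sub>M count_space ?U)"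
      unfolding pair_measure_countable[OF c1 cU] by simp
    show ?thesis using S.nn_integral_fst[OF mm] by simp
  qed
  also have "\<dots> = (\<integral>\<^sup>+x. \<psi> x * (\<Sum>j. \<psi> (Suc j)) ^ n \<partial>count_space {1..})"
    by (subst nn_integral_cmult) (auto simp: Suc.IH)
  also have "\<dots> = (\<Sum>j. \<psi> (Suc j)) ^ Suc n"
  proof -
    have s1': "integral\<^sup>N (count_space {Suc 0..}) \<psi> = (\<Sum>j. \<psi> (Suc j))" using s1 by simp
    show ?thesis by (subst nn_integral_multc) (auto simp: s1')
  qed
  finally show ?case .
qed

lemma total_sum:
  fixes \<psi> :: "nat \<Rightarrow> ennreal"
  assumes mu: "(\<Sum>j. \<psi> (Suc j)) < 1"
  shows "(\<integral>\<^sup>+w. (\<Prod>l<length w. \<psi> (w!l)) \<partial>count_space AT) < \<infinity>"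
proof -
  let ?f = "\<lambda>w. (\<Prod>l<length w. \<psi> (w!l))"
  let ?\<mu> = "\<Sum>j. \<psi> (Suc j)"
  have pw: "?f w * indicator AT w = (\<Sum>n. ?f w * indicator {w\<in>UH. length w = Suc n} w)" for w
  proof (cases "w \<in> AT")
    case True
    then obtain n0 where n0: "length w = Suc n0" by (cases w) (auto simp: AT_def)
    have "(\<lambda>n. ?f w * indicator {w\<in>UH. length w = Suc n} w) = (\<lambda>n. if n = n0 then ?f w else 0)"
      using True n0 by (auto simp: AT_def indicator_def fun_eq_iff)
    moreover have "(\<lambda>n. if n = n0 then ?f w else 0) sums ?f w"
      using sums_single[of n0 "\<lambda>_. ?f w"] by simp
    ultimately show ?thesis using True by (simp add: sums_iff)
  next
    case False
    then have "(\<lambda>n. ?f w * indicator {w\<in>UH. length w = Suc n} w) = (\<lambda>n. 0)"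
      by (auto simp: AT_def indicator_def fun_eq_iff)
    then show ?thesis using False by simp
  qed
  have "(\<integral>\<^sup>+w. ?f w \<partial>count_space AT) = (\<integral>\<^sup>+w. ?f w * indicator AT w \<partial>count_space UNIV)"
    by (rule nn_integral_count_space_indicator) simp
  also have "\<dots> = (\<integral>\<^sup>+w. (\<Sum>n. ?f w * indicator {w\<in>UH. length w = Suc n} w) \<partial>count_space UNIV)"
    by (simp only: pw)
  also have "\<dots> = (\<Sum>n. \<integral>\<^sup>+w. ?f w * indicator {w\<in>UH. length w = Suc n} w \<partial>count_space UNIV)"
    by (rule nn_integral_suminf) simp
  also have "\<dots> = (\<Sum>n. ?\<mu> ^ Suc n)"
  proof (rule suminf_cong)
    fix n
    have "(\<integral>\<^sup>+w. ?f w * indicator {w\<in>UH. length w = Suc n} w \<partial>count_space UNIV) = (\<integral>\<^sup>+w. ?f w \<partial>count_space {w\<in>UH. length w = Suc n})"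
      by (rule nn_integral_count_space_indicator[symmetric]) simp
    then show "(\<integral>\<^sup>+w. ?f w * indicator {w\<in>UH. length w = Suc n} w \<partial>count_space UNIV) = ?\<mu> ^ Suc n"
      using level_sum[where \<psi>=\<psi> and n="Suc n"] by simp
  qed
  also have "\<dots> < \<infinity>"
  proof -
    obtain r where r: "0 \<le> r" "?\<mu> = ennreal r" using mu by (cases ?\<mu>) auto
    have r1: "r < 1" using mu r by simp
    have "(\<Sum>n. ?\<mu> ^ Suc n) = (\<Sum>n. ennreal (r ^ Suc n))"
      by (rule suminf_cong) (simp only: r(2) ennreal_power[OF r(1)])
    also have "\<dots> = ennreal (\<Sum>n. r ^ Suc n)"
      using r r1 by (intro suminf_ennreal2) (auto simp: summable_geometric_iff)
    finally show ?thesis by simp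
  qed
  finally show ?thesis .
qed

locale cmj = prob_space M for M :: "'a measure" +
  fixes X :: "nat list \<Rightarrow> 'a \<Rightarrow> ennreal" and \<alpha> :: real
  assumes alpha: "\<alpha> > 0"
    and meas: "\<And>u j. u \<in> UH \<Longrightarrow> 1 \<le> j \<Longrightarrow> X (u @ [j]) \<in> borel_measurable M"
    and indep_nodes: "indep_vars (\<lambda>_. PiM UNIV (\<lambda>_. borel))
                        (\<lambda>u \<omega> j. X (u @ [Suc j]) \<omega>) UH"
    and copies: "\<And>u. u \<in> UH \<Longrightarrow>
        distr M (PiM UNIV (\<lambda>_. borel)) (\<lambda>\<omega> j. X (u @ [Suc j]) \<omega>)
      = distr M (PiM UNIV (\<lambda>_. borel)) (\<lambda>\<omega> j. X [Suc j] \<omega>)"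
    and A1: "indep_vars (\<lambda>_. borel) (\<lambda>i. X [i]) {1..}"
    and A2: "\<And>j. 1 \<le> j \<Longrightarrow> AE \<omega> in M. X [j] \<omega> < \<infinity>"
begin

lemma seq_meas: "u \<in> UH \<Longrightarrow> (\<lambda>\<omega> j. X (u @ [Suc j]) \<omega>) \<in> measurable M (PiM UNIV (\<lambda>_. borel))"
  using indep_nodes unfolding indep_vars_def2 by auto

lemma distr_atom:
  assumes u: "u \<in> UH" and j: "1 \<le> j"
  shows "distr M borel (X (u @ [j])) = distr M borel (X [j])"
proof -
  have e: "\<And>v. X (v @ [j]) = (\<lambda>f. f (j - 1)) \<circ> (\<lambda>\<omega> j. X (v @ [Suc j]) \<omega>)"
    using j by (auto simp: fun_eq_iff)
  have pm: "(\<lambda>f. f (j - 1)) \<in> measurable (PiM UNIV (\<lambda>_::nat. borel)) (borel :: ennreal measure)"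
    by (rule measurable_component_singleton) auto
  have r: "[] \<in> UH" by (simp add: UH_def)
  have "distr M borel (X (u @ [j])) = distr (distr M (PiM UNIV (\<lambda>_. borel)) (\<lambda>\<omega> j. X (u @ [Suc j]) \<omega>)) borel (\<lambda>f. f (j - 1))"
    by (subst distr_distr[OF pm seq_meas[OF u]]) (simp only: e[of u])
  also have "\<dots> = distr (distr M (PiM UNIV (\<lambda>_. borel)) (\<lambda>\<omega> j. X ([] @ [Suc j]) \<omega>)) borel (\<lambda>f. f (j - 1))"
    using copies[OF u] by simp
  also have "\<dots> = distr M borel (X ([] @ [j]))"
    by (subst distr_distr[OF pm seq_meas[OF r]]) (simp only: e[of "[]"])
  finally show ?thesis by simp
qed

lemma node_indep:
  assumes u: "u \<in> UH"
  shows "indep_vars (\<lambda>_. borel) (\<lambda>i. X (u @ [i])) {1..}"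
proof -
  have r: "[] \<in> UH" by (simp add: UH_def)
  have rv: "\<And>v i. v \<in> UH \<Longrightarrow> i \<in> {1..} \<Longrightarrow> random_variable borel (X (v @ [i]))"
    using meas by auto
  have pm: "(\<lambda>f. \<lambda>i\<in>{1::nat..}. f (i - 1)) \<in> measurable (PiM UNIV (\<lambda>_::nat. borel)) (PiM {1..} (\<lambda>_. borel :: ennreal measure))"
    by (intro measurable_restrict measurable_component_singleton) auto
  have e: "\<And>v. (\<lambda>\<omega>. \<lambda>i\<in>{1::nat..}. X (v @ [i]) \<omega>) = (\<lambda>f. \<lambda>i\<in>{1..}. f (i - 1)) \<circ> (\<lambda>\<omega> j. X (v @ [Suc j]) \<omega>)"
    by (auto simp: fun_eq_iff restrict_def)
  have "distr M (PiM {1..} (\<lambda>_. borel)) (\<lambda>\<omega>. \<lambda>i\<in>{1..}. X (u @ [i]) \<omega>)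
      = distr (distr M (PiM UNIV (\<lambda>_. borel)) (\<lambda>\<omega> j. X (u @ [Suc j]) \<omega>)) (PiM {1..} (\<lambda>_. borel)) (\<lambda>f. \<lambda>i\<in>{1..}. f (i - 1))"
    by (subst distr_distr[OF pm seq_meas[OF u]]) (simp only: e[of u])
  also have "\<dots> = distr (distr M (PiM UNIV (\<lambda>_. borel)) (\<lambda>\<omega> j. X ([] @ [Suc j]) \<omega>)) (PiM {1..} (\<lambda>_. borel)) (\<lambda>f. \<lambda>i\<in>{1..}. f (i - 1))"
    using copies[OF u] by simp
  also have "\<dots> = distr M (PiM {1..} (\<lambda>_. borel)) (\<lambda>\<omega>. \<lambda>i\<in>{1..}. X ([] @ [i]) \<omega>)"
    by (subst distr_distr[OF pm seq_meas[OF r]]) (simp only: e[of "[]"])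
  also have "\<dots> = PiM {1..} (\<lambda>i. distr M borel (X [i]))"
    using indep_vars_iff_distr_eq_PiM'[of "{1..}" "\<lambda>i. X [i]" "\<lambda>_. borel"] A1 rv[OF r] by auto
  also have "\<dots> = PiM {1..} (\<lambda>i. distr M borel (X (u @ [i])))"
    by (rule PiM_cong) (auto simp: distr_atom[OF u])
  finally show ?thesis
    using indep_vars_iff_distr_eq_PiM'[of "{1..}" "\<lambda>i. X (u @ [i])" "\<lambda>_. borel"] rv[OF u] by auto
qed


lemma AT_decomp: "a \<in> AT \<Longrightarrow> butlast a @ [last a] = a \<and> butlast a \<in> UH \<and> 1 \<le> last a"
  unfolding AT_def UH_def by (auto simp: in_set_butlastD)

lemma atom_rv: "a \<in> AT \<Longrightarrow> random_variable borel (X a)"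
proof -
  assume a: "a \<in> AT"
  have "X (butlast a @ [last a]) \<in> borel_measurable M" using AT_decomp[OF a] by (intro meas) auto
  then show ?thesis using AT_decomp[OF a] by simp
qed

lemma atoms_indep: "indep_vars (\<lambda>_. borel) X AT"
  unfolding indep_vars_def2
proof (intro conjI ballI atom_rv indep_setsI)
  fix a assume "a \<in> AT"
  then show "{X a -` A \<inter> space M |A. A \<in> sets borel} \<subseteq> events"
    using atom_rv by (auto intro: measurable_sets)
next
  fix E J assume J: "J \<noteq> {}" "J \<subseteq> AT" "finite J"
    and E: "\<forall>j\<in>J. E j \<in> {X j -` A \<inter> space M |A. A \<in> sets borel}"
  then have "\<forall>j\<in>J. \<exists>A. E j = X j -` A \<inter> space M \<and> A \<in> sets borel" by blast
  then have "\<exists>B. \<forall>j\<in>J. E j = X j -` B j \<inter> space M \<and> B j \<in> sets borel" by (rule bchoice)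
  then obtain B where B0: "\<forall>j\<in>J. E j = X j -` B j \<inter> space M \<and> B j \<in> sets borel" by blast
  have B: "\<And>j. j \<in> J \<Longrightarrow> E j = X j -` B j \<inter> space M \<and> B j \<in> sets borel" using B0 by blast
  define U where "U = butlast ` J"
  define Ju where "Ju u = {a \<in> J. butlast a = u}" for u
  define C where "C u = {f \<in> space (PiM UNIV (\<lambda>_::nat. borel::ennreal measure)). \<forall>a\<in>Ju u. f (last a - 1) \<in> B a}" for u
  define sq where "sq u = (\<lambda>\<omega> j. X (u @ [Suc j]) \<omega>)" for u
  have U: "finite U" "U \<noteq> {}" "U \<subseteq> UH"
    using J AT_decomp unfolding U_def by auto
  have Jfin: "finite (Ju u)" for u using J unfolding Ju_def by auto
  have Jne: "u \<in> U \<Longrightarrow> Ju u \<noteq> {}" for u unfolding U_def Ju_def by auto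
  have dec: "a \<in> J \<Longrightarrow> butlast a @ [last a] = a \<and> butlast a \<in> UH \<and> 1 \<le> last a" for a
    using AT_decomp J by auto
  have sqa: "a \<in> Ju u \<Longrightarrow> sq u \<omega> (last a - 1) = X a \<omega>" for a u \<omega>
    proof -
    assume a: "a \<in> Ju u"
    then have "u @ [Suc (last a - 1)] = a" using dec[of a] unfolding Ju_def by auto
    then show ?thesis unfolding sq_def by simp
  qed
  have Csets: "C u \<in> sets (PiM UNIV (\<lambda>_. borel))" if u: "u \<in> U" for u
    unfolding C_def
  proof (rule sets.sets_Collect_finite_All'[OF _ Jfin Jne[OF u]])
    fix a assume "a \<in> Ju u"
    then have "B a \<in> sets borel" using B unfolding Ju_def by auto
    then have "(\<lambda>f. f (last a - 1)) -` B a \<inter> space (PiM UNIV (\<lambda>_::nat. borel::ennreal measure)) \<in> sets (PiM UNIV (\<lambda>_. borel))"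
      by (intro measurable_sets[OF measurable_component_singleton]) auto
    then show "{f \<in> space (PiM UNIV (\<lambda>_::nat. borel::ennreal measure)). f (last a - 1) \<in> B a} \<in> sets (PiM UNIV (\<lambda>_. borel))"
      by (simp add: Int_def conj_commute)
  qed
  have sqsp: "\<omega> \<in> space M \<Longrightarrow> u \<in> UH \<Longrightarrow> sq u \<omega> \<in> space (PiM UNIV (\<lambda>_::nat. borel::ennreal measure))" for u \<omega>
    using measurable_space[OF seq_meas] unfolding sq_def by blast
  have L: "(\<Inter>j\<in>J. E j) = {\<omega>\<in>space M. \<forall>a\<in>J. X a \<omega> \<in> B a}" using J(1) B by auto
  have R: "(\<Inter>u\<in>U. sq u -` C u \<inter> space M) = {\<omega>\<in>space M. \<forall>a\<in>J. X a \<omega> \<in> B a}"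
  proof (intro equalityI subsetI)
    fix \<omega> assume w: "\<omega> \<in> (\<Inter>u\<in>U. sq u -` C u \<inter> space M)"
    then have sp: "\<omega> \<in> space M" using U(2) by auto
    have "X a \<omega> \<in> B a" if a: "a \<in> J" for a
    proof -
      have "butlast a \<in> U" "a \<in> Ju (butlast a)" using a unfolding U_def Ju_def by auto
      moreover have "\<omega> \<in> sq (butlast a) -` C (butlast a)" using w \<open>butlast a \<in> U\<close> by blast
      ultimately show ?thesis using sqa[of a "butlast a" \<omega>] unfolding C_def by auto
    qed
    then show "\<omega> \<in> {\<omega>\<in>space M. \<forall>a\<in>J. X a \<omega> \<in> B a}" using sp by auto
  next
    fix \<omega> assume w: "\<omega> \<in> {\<omega>\<in>space M. \<forall>a\<in>J. X a \<omega> \<in> B a}"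
    show "\<omega> \<in> (\<Inter>u\<in>U. sq u -` C u \<inter> space M)"
    proof
      fix u assume u: "u \<in> U"
      then have "sq u \<omega> \<in> space (PiM UNIV (\<lambda>_::nat. borel::ennreal measure))" using sqsp w U(3) by auto
      moreover have "\<forall>a\<in>Ju u. sq u \<omega> (last a - 1) \<in> B a" using sqa w unfolding Ju_def by auto
      ultimately show "\<omega> \<in> sq u -` C u \<inter> space M" using w unfolding C_def by auto
    qed
  qed
  have seteq: "(\<Inter>j\<in>J. E j) = (\<Inter>u\<in>U. sq u -` C u \<inter> space M)"
    using L R by simp
  have "prob (\<Inter>j\<in>J. E j) = (\<Prod>u\<in>U. prob (sq u -` C u \<inter> space M))"
    unfolding seteq sq_def
    by (rule indep_varsD[OF indep_nodes U(2,1,3)]) (use Csets in \<open>auto simp: sq_def\<close>)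
  also have "\<dots> = (\<Prod>u\<in>U. \<Prod>a\<in>Ju u. prob (E a))"
  proof (rule prod.cong[OF refl])
    fix u assume u: "u \<in> U"
    have uUH: "u \<in> UH" using u U by auto
    have inj: "inj_on last (Ju u)"
    proof
      fix a b assume "a \<in> Ju u" "b \<in> Ju u" "last a = last b"
      then show "a = b" using dec[of a] dec[of b] unfolding Ju_def by auto
    qed
    have lastJ: "last ` Ju u \<subseteq> {1..}" using dec unfolding Ju_def by auto
    have bk: "a \<in> Ju u \<Longrightarrow> u @ [last a] = a" for a using dec unfolding Ju_def by auto
    have "sq u -` C u \<inter> space M = (\<Inter>a\<in>Ju u. X a -` B a \<inter> space M)"
      using Jne[OF u] sqa sqsp[OF _ uUH] unfolding C_def by auto
    also have "\<dots> = (\<Inter>i\<in>last ` Ju u. X (u @ [i]) -` B (u @ [i]) \<inter> space M)"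
      using bk by auto
    finally have "prob (sq u -` C u \<inter> space M) = prob (\<Inter>i\<in>last ` Ju u. X (u @ [i]) -` B (u @ [i]) \<inter> space M)"
      by simp
    also have "\<dots> = (\<Prod>i\<in>last ` Ju u. prob (X (u @ [i]) -` B (u @ [i]) \<inter> space M))"
    proof (rule indep_varsD[OF node_indep[OF uUH]])
      show "last ` Ju u \<noteq> {}" "finite (last ` Ju u)" "last ` Ju u \<subseteq> {1..}"
        using Jne[OF u] Jfin lastJ by auto
      fix i assume "i \<in> last ` Ju u"
      then obtain a where "a \<in> Ju u" "i = last a" by auto
      then show "B (u @ [i]) \<in> sets borel" using bk B unfolding Ju_def by auto
    qed
    also have "\<dots> = (\<Prod>a\<in>Ju u. prob (X a -` B a \<inter> space M))"
      by (subst prod.reindex[OF inj]) (auto simp: bk)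
    also have "\<dots> = (\<Prod>a\<in>Ju u. prob (E a))"
      using B unfolding Ju_def by auto
    finally show "prob (sq u -` C u \<inter> space M) = (\<Prod>a\<in>Ju u. prob (E a))" .
  qed
  also have "\<dots> = (\<Prod>a\<in>J. prob (E a))"
    unfolding Ju_def using prod.group[OF J(3) U(1), of butlast "\<lambda>a. prob (E a)"] U_def by auto
  finally show "prob (\<Inter>j\<in>J. E j) = (\<Prod>j\<in>J. prob (E j))" .
qed

definition Y :: "nat list \<Rightarrow> 'a \<Rightarrow> real" where "Y a \<omega> = (if a \<in> AT then enn2real (X a \<omega>) else 0)"

lemma Y_nonneg[simp]: "0 \<le> Y a \<omega>" by (simp add: Y_def)

lemma Y_AT: "a \<in> AT \<Longrightarrow> Y a = (\<lambda>\<omega>. enn2real (X a \<omega>))" by (simp add: Y_def fun_eq_iff)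

lemma Y_rv[measurable]: "Y a \<in> borel_measurable M"
proof (cases "a \<in> AT")
  case True
  then show ?thesis unfolding Y_AT[OF True] using atom_rv[OF True] by measurable
next
  case False
  then have "Y a = (\<lambda>_. 0)" by (simp add: Y_def fun_eq_iff)
  then show ?thesis by simp
qed

lemma Y_indep: "indep_vars (\<lambda>_. borel) Y AT"
proof -
  have "indep_vars (\<lambda>_. borel) (\<lambda>i x. enn2real (X i x)) AT"
    by (rule indep_vars_compose2[OF atoms_indep]) measurable
  then show ?thesis by (rule indep_vars_cong[THEN iffD1, rotated 3]) (auto simp: Y_AT)
qed

lemma root_AT: "1 \<le> m \<Longrightarrow> [m] \<in> AT" by (simp add: AT_def UH_def)
lemma snoc_AT: "w \<in> UH \<Longrightarrow> 1 \<le> m \<Longrightarrow> w @ [m] \<in> AT" by (simp add: AT_def UH_def)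

lemma distr_atom': "a \<in> AT \<Longrightarrow> distr M borel (X a) = distr M borel (X [last a])"
  using distr_atom[of "butlast a" "last a"] AT_decomp[of a] by simp

lemma Y_distr: "a \<in> AT \<Longrightarrow> distr M borel (Y a) = distr M borel (Y [last a])"
proof -
  assume a: "a \<in> AT"
  have l: "[last a] \<in> AT" using AT_decomp[OF a] by (simp add: root_AT)
  have "distr M borel (Y a) = distr (distr M borel (X a)) borel enn2real"
    unfolding Y_AT[OF a] by (subst distr_distr) (use atom_rv[OF a] in \<open>auto simp: comp_def\<close>)
  also have "\<dots> = distr (distr M borel (X [last a])) borel enn2real" using distr_atom'[OF a] by simp
  also have "\<dots> = distr M borel (Y [last a])"
    unfolding Y_AT[OF l] by (subst distr_distr) (use atom_rv[OF l] in \<open>auto simp: comp_def\<close>)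
  finally show ?thesis .
qed

lemma countable_AT: "countable AT" by (rule countable_subset[OF subset_UNIV]) simp

lemma AE_fin: "AE \<omega> in M. \<forall>a\<in>AT. X a \<omega> = ennreal (Y a \<omega>)"
proof (rule AE_ball_countable'[OF _ countable_AT])
  fix a assume a: "a \<in> AT"
  have l: "[last a] \<in> AT" using AT_decomp[OF a] by (simp add: root_AT)
  have "AE \<omega> in M. X [last a] \<omega> < \<infinity>" using A2 AT_decomp[OF a] by auto
  then have "AE x in distr M borel (X [last a]). x < \<infinity>"
    by (subst AE_distr_iff) (use atom_rv[OF l] in auto)
  then have "AE x in distr M borel (X a). x < \<infinity>" by (subst distr_atom'[OF a])
  then have "AE \<omega> in M. X a \<omega> < \<infinity>"
    by (subst (asm) AE_distr_iff) (use atom_rv[OF a] in auto)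
  then show "AE \<omega> in M. X a \<omega> = ennreal (Y a \<omega>)"
    by eventually_elim (auto simp: Y_AT[OF a] less_top)
qed

definition xr :: "nat list set \<Rightarrow> 'a \<Rightarrow> nat list \<Rightarrow> real" where
  "xr P \<omega> = restrict (\<lambda>a. Y a \<omega>) P"

lemma xr_meas[measurable]: "P \<subseteq> AT \<Longrightarrow> xr P \<in> measurable M (PiM P (\<lambda>_. borel))"
  unfolding xr_def by (intro measurable_restrict) auto

lemma indep_prod2:
  fixes f g :: "(nat list \<Rightarrow> real) \<Rightarrow> ennreal"
  assumes PQ: "P \<subseteq> AT" "Q \<subseteq> AT" "P \<inter> Q = {}"
    and f: "f \<in> borel_measurable (PiM P (\<lambda>_. borel))" and g: "g \<in> borel_measurable (PiM Q (\<lambda>_. borel))"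
  shows "(\<integral>\<^sup>+\<omega>. f (xr P \<omega>) * g (xr Q \<omega>) \<partial>M) = (\<integral>\<^sup>+\<omega>. f (xr P \<omega>) \<partial>M) * (\<integral>\<^sup>+\<omega>. g (xr Q \<omega>) \<partial>M)"
proof -
  have "indep_var (PiM P (\<lambda>_. borel)) (xr P) (PiM Q (\<lambda>_. borel)) (xr Q)"
    unfolding xr_def by (rule indep_var_restrict[OF Y_indep PQ(3,1,2)])
  then have iv: "indep_var borel (f \<circ> xr P) borel (g \<circ> xr Q)"
    by (rule indep_var_compose[OF _ f g])
  have *: "(\<lambda>\<omega>. f (xr P \<omega>) * g (xr Q \<omega>)) = (\<lambda>\<omega>. \<Prod>i\<in>UNIV. (case_bool (f \<circ> xr P) (g \<circ> xr Q) i \<omega>))"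
    by (simp add: UNIV_bool mult.commute)
  have **: "(\<lambda> _. borel) = case_bool borel borel"
    by (rule ext, metis (full_types) bool.simps(3) bool.simps(4))
  have "indep_vars (\<lambda>_. borel) (case_bool (f \<circ> xr P) (g \<circ> xr Q)) UNIV"
    using iv unfolding indep_var_def ** .
  then show ?thesis
    unfolding * by (subst indep_vars_nn_integral) (auto simp: UNIV_bool mult.commute comp_def)
qed

definition rho :: "nat \<Rightarrow> real measure" where "rho m = distr M borel (Y [m])"
definition Phi :: "nat \<Rightarrow> ennreal" where
  "Phi m = (\<integral>\<^sup>+p. ennreal (exp (\<alpha> * (max 0 (snd p) - max 0 (fst p)))) \<partial>(rho m \<Otimes>\<^sub>M rho m))"

lemma sets_rho[measurable_cong]: "sets (rho m) = sets borel" by (simp add: rho_def)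

lemma prob_rho: "prob_space (rho m)"
  unfolding rho_def by (rule prob_space_distr) simp

lemma xr_single: "xr {a} \<omega> a = Y a \<omega>" by (simp add: xr_def)

lemma indep_two:
  assumes "a \<in> AT" "b \<in> AT" "a \<noteq> b"
  shows "indep_var borel (Y a) borel (Y b)"
proof -
  have "indep_var (PiM {a} (\<lambda>_. borel)) (xr {a}) (PiM {b} (\<lambda>_. borel)) (xr {b})"
    unfolding xr_def by (rule indep_var_restrict[OF Y_indep]) (use assms in auto)
  then have "indep_var borel ((\<lambda>x. x a) \<circ> xr {a}) borel ((\<lambda>x. x b) \<circ> xr {b})"
    by (rule indep_var_compose) (auto intro: measurable_component_singleton)
  moreover have "(\<lambda>x. x a) \<circ> xr {a} = Y a" "(\<lambda>x. x b) \<circ> xr {b} = Y b"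
    by (auto simp: xr_def fun_eq_iff)
  ultimately show ?thesis by simp
qed

lemma phi_eq:
  assumes w: "w \<in> UH" "w \<noteq> []" and m: "1 \<le> m"
  shows "(\<integral>\<^sup>+\<omega>. ennreal (exp (\<alpha> * (Y [m] \<omega> - Y (w @ [m]) \<omega>))) \<partial>M) = Phi m"
proof -
  have a: "w @ [m] \<in> AT" "[m] \<in> AT" using w m by (auto simp: snoc_AT root_AT)
  have ne: "w @ [m] \<noteq> [m]" using w by (cases w) auto
  have "distr M borel (Y (w @ [m])) \<Otimes>\<^sub>M distr M borel (Y [m]) = distr M (borel \<Otimes>\<^sub>M borel) (\<lambda>x. (Y (w @ [m]) x, Y [m] x))"
    using indep_var_distribution_eq indep_two[OF a ne] by blast
  then have eq: "rho m \<Otimes>\<^sub>M rho m = distr M (borel \<Otimes>\<^sub>M borel) (\<lambda>x. (Y (w @ [m]) x, Y [m] x))"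
    using Y_distr[OF a(1)] unfolding rho_def by simp
  show ?thesis unfolding Phi_def eq
    by (subst nn_integral_distr) (auto simp: max_def)
qed

lemma Phi_ge1: "1 \<le> Phi m"
proof -
  interpret R: prob_space "rho m" by (rule prob_rho)
  interpret RR: pair_prob_space "rho m" "rho m" ..
  have sw: "Phi m = (\<integral>\<^sup>+p. ennreal (exp (\<alpha> * (max 0 (fst p) - max 0 (snd p)))) \<partial>(rho m \<Otimes>\<^sub>M rho m))"
    unfolding Phi_def apply (subst RR.distr_pair_swap) apply (subst nn_integral_distr)
    by (auto simp: case_prod_beta)
  have "Phi m + Phi m = (\<integral>\<^sup>+p. ennreal (exp (\<alpha> * (max 0 (snd p) - max 0 (fst p)))) + ennreal (exp (\<alpha> * (max 0 (fst p) - max 0 (snd p)))) \<partial>(rho m \<Otimes>\<^sub>M rho m))"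
    by (subst nn_integral_add) (measurable, measurable, simp add: Phi_def[symmetric] sw[symmetric])
  also have "\<dots> \<ge> (\<integral>\<^sup>+p. 2 \<partial>(rho m \<Otimes>\<^sub>M rho m))"
  proof (rule nn_integral_mono)
    fix p :: "real \<times> real"
    have "1 + \<alpha> * (max 0 (snd p) - max 0 (fst p)) \<le> exp (\<alpha> * (max 0 (snd p) - max 0 (fst p)))" by (rule exp_ge_add_one_self)
    moreover have "1 + \<alpha> * (max 0 (fst p) - max 0 (snd p)) \<le> exp (\<alpha> * (max 0 (fst p) - max 0 (snd p)))" by (rule exp_ge_add_one_self)
    ultimately have "2 \<le> exp (\<alpha> * (max 0 (snd p) - max 0 (fst p))) + exp (\<alpha> * (max 0 (fst p) - max 0 (snd p)))" by (simp add: algebra_simps)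
    then have "ennreal 2 \<le> ennreal (exp (\<alpha> * (max 0 (snd p) - max 0 (fst p))) + exp (\<alpha> * (max 0 (fst p) - max 0 (snd p))))"
      by (rule ennreal_leI)
    moreover have "ennreal (exp (\<alpha> * (max 0 (snd p) - max 0 (fst p))) + exp (\<alpha> * (max 0 (fst p) - max 0 (snd p)))) = ennreal (exp (\<alpha> * (max 0 (snd p) - max 0 (fst p)))) + ennreal (exp (\<alpha> * (max 0 (fst p) - max 0 (snd p))))"
      by (rule ennreal_plus) auto
    ultimately show "2 \<le> ennreal (exp (\<alpha> * (max 0 (snd p) - max 0 (fst p)))) + ennreal (exp (\<alpha> * (max 0 (fst p) - max 0 (snd p))))"
      by simp
  qed
  finally have "2 \<le> Phi m + Phi m" by (simp add: RR.emeasure_space_1)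
  then have "2 * 1 \<le> 2 * Phi m" by (simp add: mult_2)
  then show ?thesis by (subst (asm) ennreal_mult_le_mult_iff) auto
qed

definition evt :: "nat list \<Rightarrow> nat \<Rightarrow> nat \<Rightarrow> real \<Rightarrow> real \<Rightarrow> 'a \<Rightarrow> bool" where
  "evt w n0 N t d \<omega> \<longleftrightarrow> (\<exists>n\<le>N. t + (\<Sum>m\<in>{n0<..n0+n}. Y (w @ [m]) \<omega>) \<le> d + (\<Sum>m\<in>{n0<..n0+n}. Y [m] \<omega>))"

lemma evt_0: "evt w n0 0 t d \<omega> \<longleftrightarrow> t \<le> d"
  by (simp add: evt_def)

lemma ivl_Suc: "{n0<..n0 + Suc n} = insert (Suc n0) {Suc n0<..Suc n0 + n}"
  by auto

lemma evt_Suc: "evt w n0 (Suc N) t d \<omega> \<longleftrightarrow>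
   t \<le> d \<or> evt w (Suc n0) N (t + Y (w @ [Suc n0]) \<omega>) (d + Y [Suc n0] \<omega>) \<omega>"
proof
  assume "evt w n0 (Suc N) t d \<omega>"
  then obtain n where n: "n \<le> Suc N" "t + (\<Sum>m\<in>{n0<..n0+n}. Y (w @ [m]) \<omega>) \<le> d + (\<Sum>m\<in>{n0<..n0+n}. Y [m] \<omega>)"
    unfolding evt_def by blast
  show "t \<le> d \<or> evt w (Suc n0) N (t + Y (w @ [Suc n0]) \<omega>) (d + Y [Suc n0] \<omega>) \<omega>"
  proof (cases n)
    case 0 then show ?thesis using n by simp
  next
    case (Suc k)
    then have "k \<le> N" using n by simp
    moreover have "(t + Y (w @ [Suc n0]) \<omega>) + (\<Sum>m\<in>{Suc n0<..Suc n0+k}. Y (w @ [m]) \<omega>) \<le> (d + Y [Suc n0] \<omega>) + (\<Sum>m\<in>{Suc n0<..Suc n0+k}. Y [m] \<omega>)"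
      using n(2) unfolding Suc ivl_Suc by (simp add: algebra_simps)
    ultimately show ?thesis unfolding evt_def by blast
  qed
next
  assume "t \<le> d \<or> evt w (Suc n0) N (t + Y (w @ [Suc n0]) \<omega>) (d + Y [Suc n0] \<omega>) \<omega>"
  then show "evt w n0 (Suc N) t d \<omega>"
  proof
    assume "t \<le> d" then show ?thesis unfolding evt_def by (intro exI[of _ 0]) simp
  next
    assume "evt w (Suc n0) N (t + Y (w @ [Suc n0]) \<omega>) (d + Y [Suc n0] \<omega>) \<omega>"
    then obtain k where k: "k \<le> N" "(t + Y (w @ [Suc n0]) \<omega>) + (\<Sum>m\<in>{Suc n0<..Suc n0+k}. Y (w @ [m]) \<omega>) \<le> (d + Y [Suc n0] \<omega>) + (\<Sum>m\<in>{Suc n0<..Suc n0+k}. Y [m] \<omega>)"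
      unfolding evt_def by blast
    then have "t + (\<Sum>m\<in>{n0<..n0+Suc k}. Y (w @ [m]) \<omega>) \<le> d + (\<Sum>m\<in>{n0<..n0+Suc k}. Y [m] \<omega>)"
      unfolding ivl_Suc by (simp add: algebra_simps)
    then show ?thesis unfolding evt_def using k(1) by (intro exI[of _ "Suc k"]) simp
  qed
qed

lemma evt_meas[measurable]:
  assumes [measurable]: "T \<in> borel_measurable M" "D \<in> borel_measurable M"
  shows "Measurable.pred M (\<lambda>\<omega>. evt w n0 N (T \<omega>) (D \<omega>) \<omega>)"
  unfolding evt_def by measurable

lemma ville:
  assumes w: "w \<in> UH" "w \<noteq> []"
  shows "finite P \<Longrightarrow> P \<subseteq> AT \<Longrightarrow> (\<And>m. n0 < m \<Longrightarrow> [m] \<notin> P \<and> w @ [m] \<notin> P) \<Longrightarrow>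
    \<Gamma> \<in> borel_measurable (PiM P (\<lambda>_. borel)) \<Longrightarrow> \<tau> \<in> borel_measurable (PiM P (\<lambda>_. borel)) \<Longrightarrow>
    \<delta> \<in> borel_measurable (PiM P (\<lambda>_. borel)) \<Longrightarrow>
    (\<integral>\<^sup>+\<omega>. \<Gamma> (xr P \<omega>) * of_bool (evt w n0 N (\<tau> (xr P \<omega>)) (\<delta> (xr P \<omega>)) \<omega>) \<partial>M)
      \<le> (\<Prod>m\<in>{n0<..n0+N}. Phi m) * (\<integral>\<^sup>+\<omega>. \<Gamma> (xr P \<omega>) * ennreal (exp (\<alpha> * (\<delta> (xr P \<omega>) - \<tau> (xr P \<omega>)))) \<partial>M)"
proof (induction N arbitrary: n0 P \<Gamma> \<tau> \<delta>)
  case 0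
  have "\<Gamma> (xr P \<omega>) * of_bool (\<tau> (xr P \<omega>) \<le> \<delta> (xr P \<omega>)) \<le> \<Gamma> (xr P \<omega>) * ennreal (exp (\<alpha> * (\<delta> (xr P \<omega>) - \<tau> (xr P \<omega>))))" for \<omega>
  proof (cases "\<tau> (xr P \<omega>) \<le> \<delta> (xr P \<omega>)")
    case True
    then have "1 \<le> exp (\<alpha> * (\<delta> (xr P \<omega>) - \<tau> (xr P \<omega>)))" using alpha by simp
    then have "1 \<le> ennreal (exp (\<alpha> * (\<delta> (xr P \<omega>) - \<tau> (xr P \<omega>))))" by (simp add: ennreal_leI)
    then show ?thesis using True mult_left_mono[OF \<open>1 \<le> ennreal _\<close>, of "\<Gamma> (xr P \<omega>)"] by simp
  qed simp
  then show ?case by (simp add: evt_0 nn_integral_mono)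
next
  case (Suc N)
  note [measurable] = Suc.prems(4,5,6)
  have [measurable]: "xr P \<in> measurable M (PiM P (\<lambda>_. borel))" using xr_meas Suc.prems(2) by blast
  define R where "R = [Suc n0]"
  define W where "W = w @ [Suc n0]"
  define P' where "P' = P \<union> {R, W}"
  have RW: "R \<in> AT" "W \<in> AT" "R \<notin> P" "W \<notin> P" using Suc.prems(3)[of "Suc n0"] w
    by (auto simp: R_def W_def root_AT snoc_AT)
  have lenw: "1 \<le> length w" using w by (cases w) auto
  have P'1: "finite P'" "P' \<subseteq> AT" using Suc.prems(1,2) RW unfolding P'_def by auto
  have P'2: "[m] \<notin> P' \<and> w @ [m] \<notin> P'" if "Suc n0 < m" for m
  proof -
    have "[m] \<noteq> w @ [Suc n0]" "w @ [m] \<noteq> [Suc n0]"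
      using lenw by (auto dest: arg_cong[of _ _ length])
    then show ?thesis using Suc.prems(3)[of m] that unfolding P'_def R_def W_def by auto
  qed
  have rP[measurable]: "(\<lambda>x. restrict x P) \<in> measurable (PiM P' (\<lambda>_. borel)) (PiM P (\<lambda>_. borel))"
    by (rule measurable_restrict_subset) (auto simp: P'_def)
  have cW[measurable]: "(\<lambda>x. x W) \<in> measurable (PiM P' (\<lambda>_. borel)) borel"
    by (rule measurable_component_singleton) (auto simp: P'_def)
  have cR[measurable]: "(\<lambda>x. x R) \<in> measurable (PiM P' (\<lambda>_. borel)) borel"
    by (rule measurable_component_singleton) (auto simp: P'_def)
  define \<Gamma>' where "\<Gamma>' = (\<lambda>x. if \<delta> (restrict x P) < \<tau> (restrict x P) then \<Gamma> (restrict x P) else 0)"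
  define \<tau>' where "\<tau>' = (\<lambda>x. \<tau> (restrict x P) + x W)"
  define \<delta>' where "\<delta>' = (\<lambda>x. \<delta> (restrict x P) + x R)"
  have m': "\<Gamma>' \<in> borel_measurable (PiM P' (\<lambda>_. borel))" "\<tau>' \<in> borel_measurable (PiM P' (\<lambda>_. borel))"
    "\<delta>' \<in> borel_measurable (PiM P' (\<lambda>_. borel))"
    unfolding \<Gamma>'_def \<tau>'_def \<delta>'_def by measurable
  note IH = Suc.IH[OF P'1 P'2 m']
  have xr1: "restrict (xr P' \<omega>) P = xr P \<omega>" for \<omega> unfolding xr_def P'_def by (auto simp: fun_eq_iff restrict_def)
  have xr2: "xr P' \<omega> W = Y W \<omega>" "xr P' \<omega> R = Y R \<omega>" for \<omega> by (auto simp: xr_def P'_def)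
  define t where "t \<omega> = \<tau> (xr P \<omega>)" for \<omega>
  define d where "d \<omega> = \<delta> (xr P \<omega>)" for \<omega>
  define G where "G \<omega> = \<Gamma> (xr P \<omega>)" for \<omega>
  have [measurable]: "t \<in> borel_measurable M" "d \<in> borel_measurable M" "G \<in> borel_measurable M"
    unfolding t_def[abs_def] d_def[abs_def] G_def[abs_def] by measurable
  define C' where "C' = (\<Prod>m\<in>{Suc n0<..Suc n0+N}. Phi m)"
  have IH': "(\<integral>\<^sup>+\<omega>. (if d \<omega> < t \<omega> then G \<omega> else 0) * of_bool (evt w (Suc n0) N (t \<omega> + Y W \<omega>) (d \<omega> + Y R \<omega>) \<omega>) \<partial>M)
     \<le> C' * (\<integral>\<^sup>+\<omega>. (if d \<omega> < t \<omega> then G \<omega> else 0) * ennreal (exp (\<alpha> * ((d \<omega> + Y R \<omega>) - (t \<omega> + Y W \<omega>)))) \<partial>M)"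
    using IH unfolding \<Gamma>'_def \<tau>'_def \<delta>'_def xr1 xr2 t_def d_def G_def C'_def .
  define f where "f x = (if \<delta> x < \<tau> x then \<Gamma> x else 0) * ennreal (exp (\<alpha> * (\<delta> x - \<tau> x)))" for x
  define g where "g y = ennreal (exp (\<alpha> * (y R - y W)))" for y :: "nat list \<Rightarrow> real"
  have fm: "f \<in> borel_measurable (PiM P (\<lambda>_. borel))" unfolding f_def[abs_def] by measurable
  have cW2[measurable]: "(\<lambda>x. x W) \<in> measurable (PiM {R, W} (\<lambda>_. borel)) borel"
    by (rule measurable_component_singleton) auto
  have cR2[measurable]: "(\<lambda>x. x R) \<in> measurable (PiM {R, W} (\<lambda>_. borel)) borel"
    by (rule measurable_component_singleton) auto
  have gm: "g \<in> borel_measurable (PiM {R, W} (\<lambda>_. borel))" unfolding g_def[abs_def] by measurable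
  have fg: "(if d \<omega> < t \<omega> then G \<omega> else 0) * ennreal (exp (\<alpha> * ((d \<omega> + Y R \<omega>) - (t \<omega> + Y W \<omega>))))
      = f (xr P \<omega>) * g (xr {R, W} \<omega>)" for \<omega>
  proof -
    have "exp (\<alpha> * ((d \<omega> + Y R \<omega>) - (t \<omega> + Y W \<omega>))) = exp (\<alpha> * (d \<omega> - t \<omega>)) * exp (\<alpha> * (Y R \<omega> - Y W \<omega>))"
      by (simp add: exp_add[symmetric] algebra_simps)
    then show ?thesis
      by (simp add: f_def g_def xr_def t_def d_def G_def ennreal_mult'' mult.assoc)
  qed
  have int_g: "(\<integral>\<^sup>+\<omega>. g (xr {R, W} \<omega>) \<partial>M) = Phi (Suc n0)"
    using phi_eq[OF w, of "Suc n0"] by (simp add: g_def xr_def R_def W_def)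
  have prodfg: "(\<integral>\<^sup>+\<omega>. f (xr P \<omega>) * g (xr {R, W} \<omega>) \<partial>M) = (\<integral>\<^sup>+\<omega>. f (xr P \<omega>) \<partial>M) * Phi (Suc n0)"
    using indep_prod2[of P "{R, W}", OF Suc.prems(2) _ _ fm gm] RW int_g by auto
  have C: "(\<Prod>m\<in>{n0<..n0+Suc N}. Phi m) = Phi (Suc n0) * C'"
    unfolding ivl_Suc C'_def by (subst prod.insert) auto
  have C1: "1 \<le> Phi (Suc n0) * C'"
    unfolding C[symmetric] by (rule prod_ge_1) (rule Phi_ge1)
  have pw: "G \<omega> * of_bool (evt w n0 (Suc N) (t \<omega>) (d \<omega>) \<omega>) \<le> G \<omega> * of_bool (t \<omega> \<le> d \<omega>) +
      (if d \<omega> < t \<omega> then G \<omega> else 0) * of_bool (evt w (Suc n0) N (t \<omega> + Y W \<omega>) (d \<omega> + Y R \<omega>) \<omega>)" for \<omega>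
    using evt_Suc[of w n0 N "t \<omega>" "d \<omega>" \<omega>] unfolding W_def R_def by (cases "t \<omega> \<le> d \<omega>") auto
  have spl: "G \<omega> * ennreal (exp (\<alpha> * (d \<omega> - t \<omega>))) = G \<omega> * of_bool (t \<omega> \<le> d \<omega>) * ennreal (exp (\<alpha> * (d \<omega> - t \<omega>))) + f (xr P \<omega>)" for \<omega>
    by (cases "t \<omega> \<le> d \<omega>") (auto simp: f_def t_def d_def G_def)
  have Ale: "G \<omega> * of_bool (t \<omega> \<le> d \<omega>) \<le> G \<omega> * of_bool (t \<omega> \<le> d \<omega>) * ennreal (exp (\<alpha> * (d \<omega> - t \<omega>)))" for \<omega>
  proof (cases "t \<omega> \<le> d \<omega>")
    case True
    then have "1 \<le> exp (\<alpha> * (d \<omega> - t \<omega>))" using alpha by simp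
    then have "1 \<le> ennreal (exp (\<alpha> * (d \<omega> - t \<omega>)))" by (simp add: ennreal_leI)
    then show ?thesis using True mult_left_mono[OF \<open>1 \<le> ennreal _\<close>, of "G \<omega>"] by simp
  qed simp
  let ?A = "\<integral>\<^sup>+\<omega>. G \<omega> * of_bool (t \<omega> \<le> d \<omega>) * ennreal (exp (\<alpha> * (d \<omega> - t \<omega>))) \<partial>M"
  let ?F = "\<integral>\<^sup>+\<omega>. f (xr P \<omega>) \<partial>M"
  have "(\<integral>\<^sup>+\<omega>. G \<omega> * of_bool (evt w n0 (Suc N) (t \<omega>) (d \<omega>) \<omega>) \<partial>M)
     \<le> (\<integral>\<^sup>+\<omega>. G \<omega> * of_bool (t \<omega> \<le> d \<omega>) +
      (if d \<omega> < t \<omega> then G \<omega> else 0) * of_bool (evt w (Suc n0) N (t \<omega> + Y W \<omega>) (d \<omega> + Y R \<omega>) \<omega>) \<partial>M)"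
    by (rule nn_integral_mono) (rule pw)
  also have "\<dots> = (\<integral>\<^sup>+\<omega>. G \<omega> * of_bool (t \<omega> \<le> d \<omega>) \<partial>M) +
      (\<integral>\<^sup>+\<omega>. (if d \<omega> < t \<omega> then G \<omega> else 0) * of_bool (evt w (Suc n0) N (t \<omega> + Y W \<omega>) (d \<omega> + Y R \<omega>) \<omega>) \<partial>M)"
    by (rule nn_integral_add) measurable
  also have "\<dots> \<le> ?A + C' * (?F * Phi (Suc n0))"
  proof (rule add_mono)
    show "(\<integral>\<^sup>+\<omega>. G \<omega> * of_bool (t \<omega> \<le> d \<omega>) \<partial>M) \<le> ?A" by (rule nn_integral_mono) (rule Ale)
    show "(\<integral>\<^sup>+\<omega>. (if d \<omega> < t \<omega> then G \<omega> else 0) * of_bool (evt w (Suc n0) N (t \<omega> + Y W \<omega>) (d \<omega> + Y R \<omega>) \<omega>) \<partial>M)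
       \<le> C' * (?F * Phi (Suc n0))"
      using IH' unfolding fg prodfg .
  qed
  also have "\<dots> \<le> (Phi (Suc n0) * C') * ?A + (Phi (Suc n0) * C') * ?F"
  proof (rule add_mono)
    show "?A \<le> (Phi (Suc n0) * C') * ?A" using mult_right_mono[OF C1, of ?A] by simp
    show "C' * (?F * Phi (Suc n0)) \<le> (Phi (Suc n0) * C') * ?F" by (simp add: ac_simps)
  qed
  also have "\<dots> = (Phi (Suc n0) * C') * (?A + ?F)" by (simp add: distrib_left)
  also have "?A + ?F = (\<integral>\<^sup>+\<omega>. G \<omega> * of_bool (t \<omega> \<le> d \<omega>) * ennreal (exp (\<alpha> * (d \<omega> - t \<omega>))) + f (xr P \<omega>) \<partial>M)"
  proof -
    have m1: "(\<lambda>\<omega>. G \<omega> * of_bool (t \<omega> \<le> d \<omega>) * ennreal (exp (\<alpha> * (d \<omega> - t \<omega>)))) \<in> borel_measurable M"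
      by measurable
    have m2: "(\<lambda>\<omega>. f (xr P \<omega>)) \<in> borel_measurable M"
      by (rule measurable_compose[OF _ fm]) measurable
    show ?thesis by (rule nn_integral_add[symmetric, OF m1 m2])
  qed
  also have "\<dots> = (\<integral>\<^sup>+\<omega>. G \<omega> * ennreal (exp (\<alpha> * (d \<omega> - t \<omega>))) \<partial>M)"
    by (simp add: spl)
  finally show ?case unfolding C t_def d_def G_def .
qed

definition psi :: "nat \<Rightarrow> ennreal" where
  "psi c = (\<integral>\<^sup>+\<omega>. ennreal (exp (- \<alpha> * (\<Sum>j\<in>{1..c}. Y [j] \<omega>))) \<partial>M)"

lemma node_copy:
  assumes u: "u \<in> UH"
  shows "(\<integral>\<^sup>+\<omega>. ennreal (exp (- \<alpha> * (\<Sum>j\<in>{1..c}. Y (u @ [j]) \<omega>))) \<partial>M) = psi c"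
proof -
  have r: "[] \<in> UH" by (simp add: UH_def)
  define F where "F s = ennreal (exp (- \<alpha> * (\<Sum>j\<in>{1..c}. enn2real (s (j - 1)))))" for s :: "nat \<Rightarrow> ennreal"
  have Fm: "F \<in> borel_measurable (PiM UNIV (\<lambda>_. borel))" unfolding F_def[abs_def] by measurable
  have e: "(\<integral>\<^sup>+\<omega>. ennreal (exp (- \<alpha> * (\<Sum>j\<in>{1..c}. Y (v @ [j]) \<omega>))) \<partial>M)
      = (\<integral>\<^sup>+\<omega>. F (\<lambda>j. X (v @ [Suc j]) \<omega>) \<partial>M)" if v: "v \<in> UH" for v
  proof -
    have "(\<Sum>j\<in>{1..c}. Y (v @ [j]) \<omega>) = (\<Sum>j\<in>{1..c}. enn2real (X (v @ [Suc (j - 1)]) \<omega>))" for \<omega>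
      by (rule sum.cong) (use v in \<open>auto simp: Y_AT snoc_AT\<close>)
    then show ?thesis unfolding F_def by simp
  qed
  have "(\<integral>\<^sup>+\<omega>. F (\<lambda>j. X (u @ [Suc j]) \<omega>) \<partial>M) = (\<integral>\<^sup>+s. F s \<partial>distr M (PiM UNIV (\<lambda>_. borel)) (\<lambda>\<omega> j. X (u @ [Suc j]) \<omega>))"
    by (rule nn_integral_distr[symmetric]) (simp_all add: seq_meas[OF u] Fm)
  also have "\<dots> = (\<integral>\<^sup>+s. F s \<partial>distr M (PiM UNIV (\<lambda>_. borel)) (\<lambda>\<omega> j. X ([] @ [Suc j]) \<omega>))"
    using copies[OF u] by simp
  also have "\<dots> = (\<integral>\<^sup>+\<omega>. F (\<lambda>j. X ([] @ [Suc j]) \<omega>) \<partial>M)"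
    by (rule nn_integral_distr) (use seq_meas[OF r] Fm in simp_all)
  finally show ?thesis using e[OF u] e[OF r] unfolding psi_def by simp
qed

lemma take_UH: "w \<in> UH \<Longrightarrow> take l w \<in> UH"
  unfolding UH_def by (auto dest: in_set_takeD)

lemma tau_prod:
  assumes w: "w \<in> AT"
  defines "c \<equiv> (\<lambda>l. if l = length w then w ! 0 else w ! l)"
  shows "(\<integral>\<^sup>+\<omega>. ennreal (exp (- \<alpha> * (\<Sum>l\<in>{1..length w}. \<Sum>j\<in>{1..c l}. Y (take l w @ [j]) \<omega>))) \<partial>M)
     = (\<Prod>l<length w. psi (w ! l))"
proof -
  let ?k = "length w"
  have wU: "w \<in> UH" "w \<noteq> []" using w by (auto simp: AT_def)
  define KK where "KK l = (\<lambda>j. take l w @ [j]) ` {1..c l}" for l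
  have KKsub: "KK l \<subseteq> AT" for l using take_UH[OF wU(1)] by (auto simp: KK_def snoc_AT)
  have disj: "disjoint_family_on KK {1..?k}"
    unfolding disjoint_family_on_def KK_def by (auto dest: arg_cong[of _ _ length])
  have iv: "indep_vars (\<lambda>l. PiM (KK l) (\<lambda>_. borel)) (\<lambda>l \<omega>. restrict (\<lambda>a. Y a \<omega>) (KK l)) {1..?k}"
    by (rule indep_vars_restrict[OF Y_indep]) (use KKsub disj in auto)
  define h where "h l x = ennreal (exp (- \<alpha> * (\<Sum>j\<in>{1..c l}. x (take l w @ [j]))))" for l and x :: "nat list \<Rightarrow> real"
  have hm: "h l \<in> borel_measurable (PiM (KK l) (\<lambda>_. borel))" for l
  proof -
    have "(\<lambda>x. \<Sum>j\<in>{1..c l}. x (take l w @ [j]) :: real) \<in> borel_measurable (PiM (KK l) (\<lambda>_. borel))"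
      apply (rule borel_measurable_sum)
      apply (rule measurable_component_singleton)
      by (auto simp: KK_def)
    then show ?thesis unfolding h_def[abs_def] by measurable
  qed
  have iv2: "indep_vars (\<lambda>_. borel) (\<lambda>l \<omega>. h l (restrict (\<lambda>a. Y a \<omega>) (KK l))) {1..?k}"
    by (rule indep_vars_compose2[OF iv hm])
  have hval: "h l (restrict (\<lambda>a. Y a \<omega>) (KK l)) = ennreal (exp (- \<alpha> * (\<Sum>j\<in>{1..c l}. Y (take l w @ [j]) \<omega>)))" for l \<omega>
    unfolding h_def by (intro arg_cong[where f=ennreal] arg_cong[where f=exp] arg_cong[where f="\<lambda>x. - \<alpha> * x"] sum.cong)
      (auto simp: KK_def)
  have "ennreal (exp (- \<alpha> * (\<Sum>l\<in>{1..?k}. \<Sum>j\<in>{1..c l}. Y (take l w @ [j]) \<omega>)))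
      = (\<Prod>l\<in>{1..?k}. h l (restrict (\<lambda>a. Y a \<omega>) (KK l)))" for \<omega>
  proof -
    have "- \<alpha> * (\<Sum>l\<in>{1..?k}. \<Sum>j\<in>{1..c l}. Y (take l w @ [j]) \<omega>) = (\<Sum>l\<in>{1..?k}. - \<alpha> * (\<Sum>j\<in>{1..c l}. Y (take l w @ [j]) \<omega>))"
      by (rule sum_distrib_left)
    then show ?thesis unfolding hval by (simp only: exp_sum[OF finite_atLeastAtMost] prod_ennreal exp_ge_zero)
  qed
  then have "(\<integral>\<^sup>+\<omega>. ennreal (exp (- \<alpha> * (\<Sum>l\<in>{1..?k}. \<Sum>j\<in>{1..c l}. Y (take l w @ [j]) \<omega>))) \<partial>M)
      = (\<integral>\<^sup>+\<omega>. (\<Prod>l\<in>{1..?k}. h l (restrict (\<lambda>a. Y a \<omega>) (KK l))) \<partial>M)" by simp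
  also have "\<dots> = (\<Prod>l\<in>{1..?k}. \<integral>\<^sup>+\<omega>. h l (restrict (\<lambda>a. Y a \<omega>) (KK l)) \<partial>M)"
    by (rule indep_vars_nn_integral[OF _ iv2]) auto
  also have "\<dots> = (\<Prod>l\<in>{1..?k}. psi (c l))"
    unfolding hval by (intro prod.cong refl node_copy take_UH wU(1))
  also have "\<dots> = (\<Prod>l<?k. psi (w ! l))"
  proof -
    have k1: "1 \<le> ?k" using wU by (cases w) auto
    have A: "{1..?k} = insert ?k {1..<?k}" using k1 by auto
    have B: "{..<?k} = insert 0 {1..<?k}" using k1 by auto
    have "(\<Prod>l\<in>{1..<?k}. psi (c l)) = (\<Prod>l\<in>{1..<?k}. psi (w ! l))"
      by (rule prod.cong) (auto simp: c_def)
    then show ?thesis unfolding A B by (simp add: c_def)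
  qed
  finally show ?thesis .
qed

definition E0 :: "nat list \<Rightarrow> 'a \<Rightarrow> bool" where
  "E0 w \<omega> \<longleftrightarrow> (\<exists>j\<ge>1. (\<Sum>l\<in>{1..<length w}. \<Sum>j'\<in>{1..w!l}. Y (take l w @ [j']) \<omega>) + (\<Sum>j'\<in>{1..w!0 + j}. Y (w @ [j']) \<omega>)
       \<le> (\<Sum>m\<in>{w!0<..w!0 + j}. Y [m] \<omega>))"

lemma E0_evt:
  assumes w: "w \<noteq> []" and n0: "w!0 \<le> n0" and E: "E0 w \<omega>"
  defines "c \<equiv> (\<lambda>l. if l = length w then w ! 0 else w ! l)"
  shows "\<exists>N. evt w n0 N (\<Sum>l\<in>{1..length w}. \<Sum>j\<in>{1..c l}. Y (take l w @ [j]) \<omega>) (\<Sum>m\<in>{w!0<..n0}. Y [m] \<omega>) \<omega>"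
proof -
  let ?k = "length w" and ?i = "w!0"
  define Bp where "Bp = (\<Sum>l\<in>{1..<?k}. \<Sum>j'\<in>{1..w!l}. Y (take l w @ [j']) \<omega>)"
  define Yw where "Yw A = (\<Sum>m\<in>A. Y (w @ [m]) \<omega>)" for A
  define Yr where "Yr A = (\<Sum>m\<in>A. Y [m] \<omega>)" for A
  have k1: "1 \<le> ?k" using w by (cases w) auto
  have tau: "(\<Sum>l\<in>{1..?k}. \<Sum>j\<in>{1..c l}. Y (take l w @ [j]) \<omega>) = Bp + Yw {1..?i}"
  proof -
    have A: "{1..?k} = insert ?k {1..<?k}" using k1 by auto
    have "(\<Sum>l\<in>{1..<?k}. \<Sum>j\<in>{1..c l}. Y (take l w @ [j]) \<omega>) = Bp"
      unfolding Bp_def by (rule sum.cong) (auto simp: c_def)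
    then show ?thesis unfolding A Yw_def by (simp add: c_def add.commute)
  qed
  have mono: "A \<subseteq> B \<Longrightarrow> finite B \<Longrightarrow> Yw A \<le> Yw B" "A \<subseteq> B \<Longrightarrow> finite B \<Longrightarrow> Yr A \<le> Yr B" for A B
    unfolding Yw_def Yr_def by (auto intro!: sum_mono2)
  from E obtain j where j: "1 \<le> j" "Bp + Yw {1..?i + j} \<le> Yr {?i<..?i + j}"
    unfolding E0_def Bp_def Yw_def Yr_def by blast
  show ?thesis
  proof (cases "?i + j \<le> n0")
    case True
    have "Yw {1..?i} \<le> Yw {1..?i + j}" by (rule mono) auto
    moreover have "Yr {?i<..?i + j} \<le> Yr {?i<..n0}" using True by (intro mono) auto
    ultimately have "Bp + Yw {1..?i} \<le> Yr {?i<..n0}" using j(2) by linarith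
    then show ?thesis unfolding tau by (intro exI[of _ 0]) (simp add: evt_0 Yr_def)
  next
    case False
    define n where "n = ?i + j - n0"
    have nn: "n0 + n = ?i + j" using False unfolding n_def by simp
    have "Yw {1..?i} + Yw {n0<..?i + j} = Yw ({1..?i} \<union> {n0<..?i + j})"
      unfolding Yw_def using n0 by (intro sum.union_disjoint[symmetric]) auto
    also have "\<dots> \<le> Yw {1..?i + j}" by (rule mono) auto
    finally have a: "Yw {1..?i} + Yw {n0<..?i + j} \<le> Yw {1..?i + j}" .
    have "Yr {?i<..?i + j} = Yr ({?i<..n0} \<union> {n0<..?i + j})"
      using False n0 by (intro arg_cong[where f=Yr]) auto
    also have "\<dots> = Yr {?i<..n0} + Yr {n0<..?i + j}"
      unfolding Yr_def by (intro sum.union_disjoint) auto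
    finally have b: "Yr {?i<..?i + j} = Yr {?i<..n0} + Yr {n0<..?i + j}" .
    have "(Bp + Yw {1..?i}) + Yw {n0<..n0 + n} \<le> Yr {?i<..n0} + Yr {n0<..n0 + n}"
      using a b j(2) unfolding nn by linarith
    then show ?thesis unfolding tau evt_def Yw_def Yr_def by (intro exI[of _ n]) auto
  qed
qed

lemma prod_Phi_bound:
  assumes Lb: "\<And>n. (\<Prod>m\<in>{K<..n}. Phi m) \<le> L" and n0: "K \<le> n0"
  shows "(\<Prod>m\<in>{n0<..n0+N}. Phi m) \<le> L"
proof -
  have sub: "{n0<..n0+N} \<subseteq> {K<..n0+N}" using n0 by auto
  have "(\<Prod>m\<in>{K<..n0+N}. Phi m) = (\<Prod>m\<in>{K<..n0+N} - {n0<..n0+N}. Phi m) * (\<Prod>m\<in>{n0<..n0+N}. Phi m)"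
    by (rule prod.subset_diff[OF sub]) simp
  moreover have "1 \<le> (\<Prod>m\<in>{K<..n0+N} - {n0<..n0+N}. Phi m)" by (rule prod_ge_1) (rule Phi_ge1)
  ultimately have "(\<Prod>m\<in>{n0<..n0+N}. Phi m) \<le> (\<Prod>m\<in>{K<..n0+N}. Phi m)"
    using mult_right_mono[of 1 "(\<Prod>m\<in>{K<..n0+N} - {n0<..n0+N}. Phi m)" "(\<Prod>m\<in>{n0<..n0+N}. Phi m)"] by simp
  then show ?thesis using Lb[of "n0+N"] by simp
qed

lemma perw:
  assumes w: "w \<in> AT" and Lb: "\<And>n. (\<Prod>m\<in>{K<..n}. Phi m) \<le> L"
  shows "(\<integral>\<^sup>+\<omega>. ennreal (exp (- \<alpha> * (\<Sum>m\<in>{1..K}. Y [m] \<omega>))) * of_bool (E0 w \<omega>) \<partial>M)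
     \<le> L * (\<Prod>l<length w. psi (w ! l))"
proof -
  let ?k = "length w" and ?i = "w!0"
  have wU: "w \<in> UH" "w \<noteq> []" using w by (auto simp: AT_def)
  define n0 where "n0 = max ?i K"
  define c where "c = (\<lambda>l. if l = length w then w ! 0 else w ! l)"
  define TA where "TA = (\<lambda>(l, j). take l w @ [j]) ` (SIGMA l:{1..?k}. {1..c l})"
  define DA where "DA = (\<lambda>m. [m]) ` {?i<..n0}"
  define P where "P = TA \<union> DA"
  have Pfin: "finite P" unfolding P_def TA_def DA_def by auto
  have PAT: "P \<subseteq> AT" unfolding P_def TA_def DA_def using take_UH[OF wU(1)]
    by (auto simp: snoc_AT root_AT)
  have Pout: "[m] \<notin> P \<and> w @ [m] \<notin> P" if m: "n0 < m" for m
  proof -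
    have "take l w @ [j] \<noteq> [m]" if "l \<in> {1..?k}" for l j using that by (cases w) (auto dest: arg_cong[of _ _ length])
    moreover have "w @ [m] \<notin> TA"
    proof
      assume "w @ [m] \<in> TA"
      then obtain p where pS: "p \<in> (SIGMA l:{1..?k}. {1..c l})" and pe: "w @ [m] = (\<lambda>(l, j). take l w @ [j]) p"
        unfolding TA_def by (rule imageE)
      obtain l j where p: "p = (l, j)" by (cases p)
      have lj: "l \<in> {1..?k}" "j \<in> {1..c l}" "take l w @ [j] = w @ [m]" using pS pe p by auto
      then have "l = ?k" by (auto dest: arg_cong[of _ _ length])
      then show False using lj m by (auto simp: c_def n0_def)
    qed
    moreover have "[m'] \<noteq> w @ [m]" for m' using wU by (cases w) auto
    ultimately show ?thesis using m unfolding P_def DA_def by (auto simp: TA_def)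
  qed
  define \<tau> where "\<tau> x = (\<Sum>l\<in>{1..?k}. \<Sum>j\<in>{1..c l}. x (take l w @ [j]))" for x :: "nat list \<Rightarrow> real"
  define \<delta> where "\<delta> x = (\<Sum>m\<in>{?i<..n0}. x [m])" for x :: "nat list \<Rightarrow> real"
  define \<Gamma> where "\<Gamma> x = ennreal (exp (- \<alpha> * \<delta> x))" for x
  have \<tau>m: "\<tau> \<in> borel_measurable (PiM P (\<lambda>_. borel))"
    unfolding \<tau>_def[abs_def]
    apply (rule borel_measurable_sum)
    apply (rule borel_measurable_sum)
    apply (rule measurable_component_singleton)
    by (auto simp: P_def TA_def)
  have \<delta>m: "\<delta> \<in> borel_measurable (PiM P (\<lambda>_. borel))"
    unfolding \<delta>_def[abs_def]
    apply (rule borel_measurable_sum)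
    apply (rule measurable_component_singleton)
    by (auto simp: P_def DA_def)
  have \<Gamma>m: "\<Gamma> \<in> borel_measurable (PiM P (\<lambda>_. borel))"
    unfolding \<Gamma>_def[abs_def] using \<delta>m by measurable
  have \<tau>v: "\<tau> (xr P \<omega>) = (\<Sum>l\<in>{1..?k}. \<Sum>j\<in>{1..c l}. Y (take l w @ [j]) \<omega>)" for \<omega>
    unfolding \<tau>_def by (intro sum.cong refl) (auto simp: xr_def P_def TA_def)
  have \<delta>v: "\<delta> (xr P \<omega>) = (\<Sum>m\<in>{?i<..n0}. Y [m] \<omega>)" for \<omega>
    unfolding \<delta>_def by (intro sum.cong refl) (auto simp: xr_def P_def DA_def)
  have [measurable]: "xr P \<in> measurable M (PiM P (\<lambda>_. borel))" using xr_meas PAT by blast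
  define F where "F N \<omega> = \<Gamma> (xr P \<omega>) * of_bool (evt w n0 N (\<tau> (xr P \<omega>)) (\<delta> (xr P \<omega>)) \<omega>)" for N \<omega>
  have Fm: "F N \<in> borel_measurable M" for N
    unfolding F_def[abs_def] using \<tau>m \<delta>m \<Gamma>m by measurable
  have Finc: "incseq F"
  proof (rule incseq_SucI, rule le_funI)
    fix N \<omega>
    have "evt w n0 N t d \<omega> \<Longrightarrow> evt w n0 (Suc N) t d \<omega>" for t d unfolding evt_def by (meson le_Suc_eq)
    then show "F N \<omega> \<le> F (Suc N) \<omega>" unfolding F_def by (auto intro: mult_left_mono)
  qed
  have S_ge: "(\<Sum>m\<in>{?i<..n0}. Y [m] \<omega>) \<le> (\<Sum>m\<in>{1..K}. Y [m] \<omega>)" for \<omega>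
    by (rule sum_mono2) (auto simp: n0_def)
  have pw: "ennreal (exp (- \<alpha> * (\<Sum>m\<in>{1..K}. Y [m] \<omega>))) * of_bool (E0 w \<omega>) \<le> (SUP N. F N \<omega>)" for \<omega>
  proof (cases "E0 w \<omega>")
    case True
    then obtain N where N: "evt w n0 N (\<tau> (xr P \<omega>)) (\<delta> (xr P \<omega>)) \<omega>"
      using E0_evt[OF wU(2) _ True, of n0] unfolding \<tau>v \<delta>v c_def n0_def by auto
    have "exp (- \<alpha> * (\<Sum>m\<in>{1..K}. Y [m] \<omega>)) \<le> exp (- \<alpha> * \<delta> (xr P \<omega>))"
      using S_ge[of \<omega>] alpha unfolding \<delta>v by simp
    then have "ennreal (exp (- \<alpha> * (\<Sum>m\<in>{1..K}. Y [m] \<omega>))) * of_bool (E0 w \<omega>) \<le> F N \<omega>"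
      using True N unfolding F_def \<Gamma>_def by (simp add: ennreal_leI)
    also have "\<dots> \<le> (SUP N. F N \<omega>)" by (rule SUP_upper) simp
    finally show ?thesis .
  qed simp
  have "(\<integral>\<^sup>+\<omega>. ennreal (exp (- \<alpha> * (\<Sum>m\<in>{1..K}. Y [m] \<omega>))) * of_bool (E0 w \<omega>) \<partial>M)
      \<le> (\<integral>\<^sup>+\<omega>. (SUP N. F N \<omega>) \<partial>M)"
    by (rule nn_integral_mono) (rule pw)
  also have "\<dots> = (SUP N. \<integral>\<^sup>+\<omega>. F N \<omega> \<partial>M)"
    by (rule nn_integral_monotone_convergence_SUP[OF Finc Fm])
  also have "\<dots> \<le> L * (\<integral>\<^sup>+\<omega>. \<Gamma> (xr P \<omega>) * ennreal (exp (\<alpha> * (\<delta> (xr P \<omega>) - \<tau> (xr P \<omega>)))) \<partial>M)"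
  proof (rule SUP_least)
    fix N
    have "(\<integral>\<^sup>+\<omega>. F N \<omega> \<partial>M) \<le> (\<Prod>m\<in>{n0<..n0+N}. Phi m) * (\<integral>\<^sup>+\<omega>. \<Gamma> (xr P \<omega>) * ennreal (exp (\<alpha> * (\<delta> (xr P \<omega>) - \<tau> (xr P \<omega>)))) \<partial>M)"
      unfolding F_def by (rule ville[OF wU Pfin PAT Pout \<Gamma>m \<tau>m \<delta>m])
    also have "\<dots> \<le> L * (\<integral>\<^sup>+\<omega>. \<Gamma> (xr P \<omega>) * ennreal (exp (\<alpha> * (\<delta> (xr P \<omega>) - \<tau> (xr P \<omega>)))) \<partial>M)"
      by (rule mult_right_mono[OF prod_Phi_bound[OF Lb]]) (auto simp: n0_def)
    finally show "(\<integral>\<^sup>+\<omega>. F N \<omega> \<partial>M) \<le> L * (\<integral>\<^sup>+\<omega>. \<Gamma> (xr P \<omega>) * ennreal (exp (\<alpha> * (\<delta> (xr P \<omega>) - \<tau> (xr P \<omega>)))) \<partial>M)" .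
  qed
  also have "(\<integral>\<^sup>+\<omega>. \<Gamma> (xr P \<omega>) * ennreal (exp (\<alpha> * (\<delta> (xr P \<omega>) - \<tau> (xr P \<omega>)))) \<partial>M)
      = (\<integral>\<^sup>+\<omega>. ennreal (exp (- \<alpha> * (\<Sum>l\<in>{1..?k}. \<Sum>j\<in>{1..c l}. Y (take l w @ [j]) \<omega>))) \<partial>M)"
  proof (rule nn_integral_cong)
    fix \<omega>
    have "exp (- \<alpha> * \<delta> (xr P \<omega>)) * exp (\<alpha> * (\<delta> (xr P \<omega>) - \<tau> (xr P \<omega>))) = exp (- \<alpha> * \<tau> (xr P \<omega>))"
      by (simp add: exp_add[symmetric] algebra_simps)
    then show "\<Gamma> (xr P \<omega>) * ennreal (exp (\<alpha> * (\<delta> (xr P \<omega>) - \<tau> (xr P \<omega>))))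
        = ennreal (exp (- \<alpha> * (\<Sum>l\<in>{1..?k}. \<Sum>j\<in>{1..c l}. Y (take l w @ [j]) \<omega>)))"
      unfolding \<Gamma>_def \<tau>v[symmetric] by (simp add: ennreal_mult''[symmetric])
  qed
  also have "\<dots> = (\<Prod>l<?k. psi (w ! l))"
    unfolding c_def by (rule tau_prod[OF w])
  finally show ?thesis .
qed

lemma E0_meas[measurable]: "Measurable.pred M (E0 w)"
  unfolding E0_def by measurable

lemma AT_infinite: "infinite AT"
proof
  assume "finite AT"
  moreover have "inj (\<lambda>m::nat. [Suc m])" by (auto simp: inj_def)
  moreover have "range (\<lambda>m::nat. [Suc m]) \<subseteq> AT" by (auto simp: root_AT)
  ultimately show False by (meson finite_subset infinite_UNIV_nat finite_imageD)
qed

lemma finite_E0: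
  assumes Lb: "\<And>n. (\<Prod>m\<in>{K<..n}. Phi m) \<le> L" and Lfin: "L < \<infinity>" and mu: "(\<Sum>j. psi (Suc j)) < 1"
  shows "AE \<omega> in M. finite {w\<in>AT. E0 w \<omega>}"
proof -
  define en where "en = from_nat_into AT"
  have bij: "bij_betw en UNIV AT" unfolding en_def by (rule bij_betw_from_nat_into[OF countable_AT AT_infinite])
  have enAT: "en n \<in> AT" for n using bij by (auto dest: bij_betw_imp_funcset)
  define e where "e \<omega> = ennreal (exp (- \<alpha> * (\<Sum>m\<in>{1..K}. Y [m] \<omega>)))" for \<omega>
  have [measurable]: "e \<in> borel_measurable M" unfolding e_def[abs_def] by measurable
  define H where "H \<omega> = (\<Sum>n. e \<omega> * of_bool (E0 (en n) \<omega>))" for \<omega>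
  have Hm: "H \<in> borel_measurable M" unfolding H_def[abs_def] by measurable
  have "(\<integral>\<^sup>+\<omega>. H \<omega> \<partial>M) = (\<Sum>n. \<integral>\<^sup>+\<omega>. e \<omega> * of_bool (E0 (en n) \<omega>) \<partial>M)"
    unfolding H_def by (rule nn_integral_suminf) measurable
  also have "\<dots> = (\<integral>\<^sup>+n. (\<integral>\<^sup>+\<omega>. e \<omega> * of_bool (E0 (en n) \<omega>) \<partial>M) \<partial>count_space UNIV)"
    by (rule nn_integral_count_space_nat[symmetric])
  also have "\<dots> \<le> (\<integral>\<^sup>+n. L * (\<Prod>l<length (en n). psi (en n ! l)) \<partial>count_space UNIV)"
    by (rule nn_integral_mono) (unfold e_def, rule perw[OF enAT Lb])
  also have "\<dots> = (\<integral>\<^sup>+w. L * (\<Prod>l<length w. psi (w ! l)) \<partial>count_space AT)"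
    by (rule nn_integral_bij_count_space[OF bij])
  also have "\<dots> = L * (\<integral>\<^sup>+w. (\<Prod>l<length w. psi (w ! l)) \<partial>count_space AT)"
    by (rule nn_integral_cmult) simp
  also have "\<dots> < \<infinity>"
    using Lfin total_sum[OF mu] by (simp add: ennreal_mult_less_top)
  finally have "AE \<omega> in M. H \<omega> \<noteq> \<infinity>" by (intro nn_integral_PInf_AE[OF Hm]) simp
  then show ?thesis
  proof eventually_elim
    fix \<omega> assume H: "H \<omega> \<noteq> \<infinity>"
    have epos: "e \<omega> \<noteq> 0" unfolding e_def by simp
    have "H \<omega> = e \<omega> * (\<Sum>n. of_bool (E0 (en n) \<omega>))" unfolding H_def by simp
    then have fin: "(\<Sum>n. of_bool (E0 (en n) \<omega>) :: ennreal) \<noteq> \<infinity>" using H epos by (auto simp: ennreal_mult_eq_top_iff)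
    have "(\<Sum>n. of_bool (E0 (en n) \<omega>) :: ennreal) = (\<integral>\<^sup>+n. of_bool (E0 (en n) \<omega>) \<partial>count_space UNIV)"
      by (rule nn_integral_count_space_nat[symmetric])
    also have "\<dots> = (\<integral>\<^sup>+w. of_bool (E0 w \<omega>) \<partial>count_space AT)"
      by (rule nn_integral_bij_count_space[OF bij])
    also have "\<dots> = (\<integral>\<^sup>+w. indicator {w\<in>AT. E0 w \<omega>} w \<partial>count_space AT)"
      by (rule nn_integral_cong) (auto simp: indicator_def)
    also have "\<dots> = emeasure (count_space AT) {w\<in>AT. E0 w \<omega>}"
      by (rule nn_integral_indicator) auto
    also have "\<dots> = (if finite {w\<in>AT. E0 w \<omega>} then of_nat (card {w\<in>AT. E0 w \<omega>}) else \<infinity>)"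
      by (rule emeasure_count_space) auto
    finally show "finite {w\<in>AT. E0 w \<omega>}" using fin by (auto split: if_splits)
  qed
qed

definition birthY :: "nat list \<Rightarrow> 'a \<Rightarrow> real" where
  "birthY v \<omega> = (\<Sum>l<length v. \<Sum>j\<in>{1..v ! l}. Y (take l v @ [j]) \<omega>)"

lemma birth_Y:
  assumes fin: "\<forall>a\<in>AT. X a \<omega> = ennreal (Y a \<omega>)" and v: "v \<in> UH"
  shows "birth X v \<omega> = ennreal (birthY v \<omega>)"
proof -
  have "birth X v \<omega> = (\<Sum>l<length v. \<Sum>j\<in>{1..v ! l}. ennreal (Y (take l v @ [j]) \<omega>))"
    unfolding birth_def using fin take_UH[OF v] by (intro sum.cong refl) (auto simp: snoc_AT)
  also have "\<dots> = ennreal (birthY v \<omega>)"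
    unfolding birthY_def by (simp add: sum_nonneg)
  finally show ?thesis .
qed

lemma birthY_snoc: "birthY (v @ [x]) \<omega> = birthY v \<omega> + (\<Sum>j\<in>{1..x}. Y (v @ [j]) \<omega>)"
proof -
  have "(\<Sum>l<length v. \<Sum>j\<in>{1..(v @ [x]) ! l}. Y (take l (v @ [x]) @ [j]) \<omega>) = birthY v \<omega>"
    unfolding birthY_def by (intro sum.cong refl) (auto simp: nth_append)
  then show ?thesis unfolding birthY_def by simp
qed

lemma birthY_split:
  assumes "v \<noteq> []"
  shows "birthY v \<omega> = (\<Sum>j\<in>{1..v ! 0}. Y [j] \<omega>) + (\<Sum>l\<in>{1..<length v}. \<Sum>j\<in>{1..v ! l}. Y (take l v @ [j]) \<omega>)"
proof -
  have "{..<length v} = insert 0 {1..<length v}" using assms by (cases v) auto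
  then show ?thesis unfolding birthY_def by simp
qed

lemma birthY_single: "birthY [x] \<omega> = (\<Sum>j\<in>{1..x}. Y [j] \<omega>)"
  unfolding birthY_def by simp

lemma birthY_nonneg: "0 \<le> birthY v \<omega>"
  unfolding birthY_def by (intro sum_nonneg) auto

lemma catch_E0:
  assumes fin: "\<forall>a\<in>AT. X a \<omega> = ennreal (Y a \<omega>)"
  shows "catchP X \<omega> \<subseteq> insert [] {w\<in>AT. E0 w \<omega>}"
proof
  fix w assume w: "w \<in> catchP X \<omega>"
  show "w \<in> insert [] {w\<in>AT. E0 w \<omega>}"
  proof (cases "w = []")
    case False
    have wU: "w \<in> UH" using w by (simp add: catchP_def)
    then have wAT: "w \<in> AT" using False by (simp add: AT_def)
    have "catches_up X (take 0 w) (drop 0 w) \<omega>" using w False unfolding catchP_def by blast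
    then obtain j where j: "1 \<le> j" "birth X (w @ [hd w + j]) \<omega> \<le> birth X [hd w + j] \<omega>"
      unfolding catches_up_def by auto
    let ?i = "w ! 0"
    have hd: "hd w = ?i" using False by (simp add: hd_conv_nth)
    have U1: "w @ [?i + j] \<in> UH" "[?i + j] \<in> UH" using wU j(1) by (auto simp: UH_def)
    have "birthY (w @ [?i + j]) \<omega> \<le> birthY [?i + j] \<omega>"
      using j(2) unfolding hd birth_Y[OF fin U1(1)] birth_Y[OF fin U1(2)] using birthY_nonneg by simp
    then have le: "(\<Sum>j\<in>{1..?i}. Y [j] \<omega>) + (\<Sum>l\<in>{1..<length w}. \<Sum>j\<in>{1..w ! l}. Y (take l w @ [j]) \<omega>)
        + (\<Sum>j'\<in>{1..?i + j}. Y (w @ [j']) \<omega>) \<le> (\<Sum>j'\<in>{1..?i + j}. Y [j'] \<omega>)"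
      unfolding birthY_snoc birthY_split[OF False] birthY_single .
    have "(\<Sum>j'\<in>{1..?i + j}. Y [j'] \<omega>) = (\<Sum>j'\<in>{1..?i} \<union> {?i<..?i + j}. Y [j'] \<omega>)"
      by (intro sum.cong refl) auto
    also have "\<dots> = (\<Sum>j'\<in>{1..?i}. Y [j'] \<omega>) + (\<Sum>j'\<in>{?i<..?i + j}. Y [j'] \<omega>)"
      by (intro sum.union_disjoint) auto
    finally have "E0 w \<omega>" using le j(1) unfolding E0_def by (intro exI[of _ j]) linarith
    then show ?thesis using wAT by simp
  qed simp
qed

end

lemma eexp_ereal: "eexp (ereal r) = ennreal (exp r)"
  by (simp add: eexp_def)

lemma eexp_meas[measurable]: "eexp \<in> borel_measurable borel"
  unfolding eexp_def[abs_def] by measurable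

lemma eexp_pt: "eexp (ereal a * (enn2ereal (ennreal y) - enn2ereal (ennreal x))) = ennreal (exp (a * (max 0 y - max 0 x)))"
proof -
  have "enn2ereal (ennreal y) = ereal (max 0 y)" "enn2ereal (ennreal x) = ereal (max 0 x)"
    by (cases "0 \<le> y"; cases "0 \<le> x"; simp add: ennreal_neg max_def zero_ennreal.rep_eq zero_ereal_def)+
  then have "ereal a * (enn2ereal (ennreal y) - enn2ereal (ennreal x)) = ereal (a * (max 0 y - max 0 x))"
    by (simp del: ereal_max)
  then show ?thesis by (simp add: eexp_def del: ereal_max)
qed

lemma enn2ereal_ennreal_max: "enn2ereal (ennreal x) = ereal (max 0 x)"
  by (cases "0 \<le> x") (auto simp: ennreal_neg max_def zero_ennreal.rep_eq zero_ereal_def)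

theorem lemma3p9:
  fixes M :: "'a measure" and X :: "nat list \<Rightarrow> 'a \<Rightarrow> ennreal"
    and \<alpha> :: real and K :: nat
  assumes M: "prob_space M"
    and meas: "\<And>u j. u \<in> UH \<Longrightarrow> 1 \<le> j \<Longrightarrow> X (u @ [j]) \<in> borel_measurable M"
    and indep_nodes: "prob_space.indep_vars M (\<lambda>_. PiM UNIV (\<lambda>_. borel))
                        (\<lambda>u \<omega> j. X (u @ [Suc j]) \<omega>) UH"
    and copies: "\<And>u. u \<in> UH \<Longrightarrow>
        distr M (PiM UNIV (\<lambda>_. borel)) (\<lambda>\<omega> j. X (u @ [Suc j]) \<omega>)
      = distr M (PiM UNIV (\<lambda>_. borel)) (\<lambda>\<omega> j. X [Suc j] \<omega>)"
    and A1: "prob_space.indep_vars M (\<lambda>_. borel) (\<lambda>i. X [i]) {1..}"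
    and A2: "\<And>j. 1 \<le> j \<Longrightarrow> AE \<omega> in M. X [j] \<omega> < \<infinity>"
    and A3: "(\<Sum>j. \<Prod>i\<in>{1..Suc j}. emeasure M {\<omega> \<in> space M. X [i] \<omega> = 0}) < 1"
    and alpha: "\<alpha> > 0" and K: "1 \<le> K"
    and laplace: "(\<Sum>j. \<integral>\<^sup>+ \<omega>. eexp (- ereal \<alpha> * enn2ereal (\<Sum>i\<in>{1..Suc j}. X [i] \<omega>)) \<partial>M) < 1"
    and prodfin: "\<exists>L. L < \<infinity> \<and>
        (\<lambda>n. \<Prod>i\<in>{K+1..n}.
            \<integral>\<^sup>+ p. eexp (ereal \<alpha> * (enn2ereal (snd p) - enn2ereal (fst p)))
              \<partial>(distr M borel (X [i]) \<Otimes>\<^sub>M distr M borel (X [i])))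
        \<longlonglongrightarrow> L"
  shows "AE \<omega> in M. finite (catchP X \<omega>)"
proof -
  have "cmj M X \<alpha>"
    unfolding cmj_def cmj_axioms_def using M alpha meas indep_nodes copies A1 A2 by blast
  then interpret C: cmj M X \<alpha> .
  have eqj: "(\<integral>\<^sup>+ \<omega>. eexp (- ereal \<alpha> * enn2ereal (\<Sum>i\<in>{1..Suc j}. X [i] \<omega>)) \<partial>M) = C.psi (Suc j)" for j
    unfolding C.psi_def
  proof (rule nn_integral_cong_AE)
    show "AE \<omega> in M. eexp (- ereal \<alpha> * enn2ereal (\<Sum>i\<in>{1..Suc j}. X [i] \<omega>)) = ennreal (exp (- \<alpha> * (\<Sum>j\<in>{1..Suc j}. C.Y [j] \<omega>)))"
      using C.AE_fin
    proof eventually_elim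
      fix \<omega> assume fin: "\<forall>a\<in>AT. X a \<omega> = ennreal (C.Y a \<omega>)"
      have "(\<Sum>i\<in>{1..Suc j}. X [i] \<omega>) = (\<Sum>i\<in>{1..Suc j}. ennreal (C.Y [i] \<omega>))"
        using fin by (intro sum.cong refl) (auto simp: C.root_AT)
      also have "\<dots> = ennreal (\<Sum>i\<in>{1..Suc j}. C.Y [i] \<omega>)" by (simp add: sum_nonneg)
      finally have eq: "(\<Sum>i\<in>{1..Suc j}. X [i] \<omega>) = ennreal (\<Sum>i\<in>{1..Suc j}. C.Y [i] \<omega>)" .
      have nn: "0 \<le> (\<Sum>i\<in>{1..Suc j}. C.Y [i] \<omega>)" by (simp add: sum_nonneg)
      have "enn2ereal (\<Sum>i\<in>{1..Suc j}. X [i] \<omega>) = ereal (\<Sum>i\<in>{1..Suc j}. C.Y [i] \<omega>)"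
        unfolding eq enn2ereal_ennreal[OF nn] ..
      then show "eexp (- ereal \<alpha> * enn2ereal (\<Sum>i\<in>{1..Suc j}. X [i] \<omega>)) = ennreal (exp (- \<alpha> * (\<Sum>j\<in>{1..Suc j}. C.Y [j] \<omega>)))"
        by (simp add: eexp_ereal)
    qed
  qed
  have mu: "(\<Sum>j. C.psi (Suc j)) < 1" using laplace unfolding eqj .
  obtain L where L: "L < \<infinity>" and lim: "(\<lambda>n. \<Prod>i\<in>{K+1..n}.
            \<integral>\<^sup>+ p. eexp (ereal \<alpha> * (enn2ereal (snd p) - enn2ereal (fst p)))
              \<partial>(distr M borel (X [i]) \<Otimes>\<^sub>M distr M borel (X [i]))) \<longlonglongrightarrow> L"
    using prodfin by blast
  have Ieq: "(\<integral>\<^sup>+ p. eexp (ereal \<alpha> * (enn2ereal (snd p) - enn2ereal (fst p)))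
              \<partial>(distr M borel (X [i]) \<Otimes>\<^sub>M distr M borel (X [i]))) = C.Phi i" if i: "1 \<le> i" for i
  proof -
    have iAT: "[i] \<in> AT" using i by (rule C.root_AT)
    interpret R: prob_space "C.rho i" by (rule C.prob_rho)
    have d1: "distr M borel (X [i]) = distr (C.rho i) borel ennreal"
    proof -
      have "distr M borel (X [i]) = distr M borel (\<lambda>\<omega>. ennreal (C.Y [i] \<omega>))"
        by (rule distr_cong_AE) (use C.AE_fin iAT C.atom_rv[OF iAT] in \<open>auto elim!: eventually_mono\<close>)
      also have "\<dots> = distr (C.rho i) borel ennreal"
        unfolding C.rho_def by (subst distr_distr) (auto simp: comp_def)
      finally show ?thesis .
    qed
    have sf: "sigma_finite_measure (distr (C.rho i) borel ennreal)"
      by (intro prob_space_imp_sigma_finite prob_space.prob_space_distr[OF C.prob_rho]) simp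
    have d2: "distr (C.rho i) borel ennreal \<Otimes>\<^sub>M distr (C.rho i) borel ennreal
        = distr (C.rho i \<Otimes>\<^sub>M C.rho i) (borel \<Otimes>\<^sub>M borel) (\<lambda>(x, y). (ennreal x, ennreal y))"
      by (rule pair_measure_distr[OF _ _ sf]) simp_all
    show ?thesis unfolding d1 d2 C.Phi_def
      by (subst nn_integral_distr) (auto simp: eexp_pt case_prod_beta simp del: ereal_max)
  qed
  define sq where "sq n = (\<Prod>i\<in>{K<..n}. C.Phi i)" for n
  have sqeq: "(\<lambda>n. \<Prod>i\<in>{K+1..n}.
            \<integral>\<^sup>+ p. eexp (ereal \<alpha> * (enn2ereal (snd p) - enn2ereal (fst p)))
              \<partial>(distr M borel (X [i]) \<Otimes>\<^sub>M distr M borel (X [i]))) = sq"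
    unfolding sq_def using K by (intro ext prod.cong) (auto simp: Ieq)
  have inc: "incseq sq"
  proof (rule incseq_SucI)
    fix n
    show "sq n \<le> sq (Suc n)"
    proof (cases "K < Suc n")
      case True
      then have "{K<..Suc n} = insert (Suc n) {K<..n}" by auto
      then have "sq (Suc n) = C.Phi (Suc n) * sq n" unfolding sq_def by simp
      then show ?thesis using mult_right_mono[OF C.Phi_ge1[of "Suc n"], of "sq n"] by simp
    next
      case False
      then have "{K<..Suc n} = {}" "{K<..n} = {}" by auto
      then show ?thesis unfolding sq_def by simp
    qed
  qed
  have Lb: "\<And>n. (\<Prod>m\<in>{K<..n}. C.Phi m) \<le> L"
    using incseq_le[OF inc lim[unfolded sqeq]] unfolding sq_def .
  have "AE \<omega> in M. finite {w\<in>AT. C.E0 w \<omega>}" by (rule C.finite_E0[OF Lb L mu])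
  then show ?thesis using C.AE_fin
  proof eventually_elim
    fix \<omega> assume "finite {w\<in>AT. C.E0 w \<omega>}" and "\<forall>a\<in>AT. X a \<omega> = ennreal (C.Y a \<omega>)"
    then show "finite (catchP X \<omega>)" using C.catch_E0 by (meson finite_insert finite_subset)
  qed
qed

end
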